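(* Let $T=T(n,a,b)$ with $a\ge 0$, $b\ge a+2$ and $2(a+b)<n-1$, and let $\ell=n-a-b$ and $r=\ell-b-a$. If $b<\frac{\ell}{2}$, then $$\rho(T)>(2a+1)(r-1)+\frac{r}{r-1}\sum_{i=1}^{\lfloor\frac{r-1}{2}\rfloor}(r-2i).$$
   Context: Hypergraphs have edges that are vertex subsets of size at least two; distance $d_T(u,v)$ in a hypertree is the length of a shortest loose path (an alternating sequence of distinct vertices and distinct edges $(v_0,e_1,v_1,\dots,e_p,v_p)$ with $v_{i-1},v_i\in e_i$ and non-consecutive edges disjoint). $\rho(T)$ is the largest eigenvalue of the distance matrix $D(T)=(d_T(u,v))_{u,v}$. For integers $n,a,b$ with $0\le a\le b$ and $a+b\le\lfloor\frac{n-1}{2}\rfloor$, put $\ell=n-a-b$ and $I=\{1,\dots,a\}\cup\{\ell-b,\dots,\ell-1\}$; $T(n,a,b)$ is the hypertree with vertex set $\{v_1,\dots,v_\ell\}\cup\{w_i:i\in I\}$ and edges $\{v_i,w_i,v_{i+1}\}$ for $i\in I$ and $\{v_i,v_{i+1}\}$ for $i\in\{1,\dots,\ell-1\}\setminus I$. *)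

theory Defs
  imports Complex_Main
begin

text \<open>A loose path of length p: vertices vs = [v_0,...,v_p] (distinct), edges es = [e_1,...,e_p]
(distinct, indexed 0..p-1 in the list), with v_{i-1}, v_i in e_i and non-consecutive
edges disjoint.\<close>
definition loose_path :: "'a set set \<Rightarrow> 'a list \<Rightarrow> 'a set list \<Rightarrow> bool" where
  "loose_path E vs es \<longleftrightarrow>
     length vs = Suc (length es) \<and> distinct vs \<and> distinct es \<and> set es \<subseteq> E \<and>
     (\<forall>i < length es. vs ! i \<in> es ! i \<and> vs ! Suc i \<in> es ! i) \<and>
     (\<forall>i < length es. \<forall>j < length es. Suc i < j \<longrightarrow> es ! i \<inter> es ! j = {})"

definition hdist :: "'a set set \<Rightarrow> 'a \<Rightarrow> 'a \<Rightarrow> nat" where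
  "hdist E u v = (LEAST p. \<exists>vs es. loose_path E vs es \<and> length es = p \<and>
                     hd vs = u \<and> last vs = v)"

definition dist_eigenvalue :: "'a set \<Rightarrow> 'a set set \<Rightarrow> real \<Rightarrow> bool" where
  "dist_eigenvalue V E mu \<longleftrightarrow>
     (\<exists>x :: 'a \<Rightarrow> real. (\<exists>u\<in>V. x u \<noteq> 0) \<and>
        (\<forall>u\<in>V. (\<Sum>v\<in>V. real (hdist E u v) * x v) = mu * x u))"

text \<open>Distance spectral radius: the largest eigenvalue of D(T) (D(T) is real symmetric,
so all eigenvalues are real).\<close>
definition dist_rho :: "'a set \<Rightarrow> 'a set set \<Rightarrow> real" where
  "dist_rho V E = Max {mu. dist_eigenvalue V E mu}"

datatype tvert = Vv nat | Wv nat

definition T_ell :: "nat \<Rightarrow> nat \<Rightarrow> nat \<Rightarrow> nat" where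
  "T_ell n a b = n - a - b"

definition T_I :: "nat \<Rightarrow> nat \<Rightarrow> nat \<Rightarrow> nat set" where
  "T_I n a b = {1..a} \<union> {T_ell n a b - b .. T_ell n a b - 1}"

definition T_verts :: "nat \<Rightarrow> nat \<Rightarrow> nat \<Rightarrow> tvert set" where
  "T_verts n a b = Vv ` {1..T_ell n a b} \<union> Wv ` T_I n a b"

definition T_edges :: "nat \<Rightarrow> nat \<Rightarrow> nat \<Rightarrow> tvert set set" where
  "T_edges n a b =
     (\<lambda>i. {Vv i, Wv i, Vv (Suc i)}) ` T_I n a b \<union>
     (\<lambda>i. {Vv i, Vv (Suc i)}) ` ({1..T_ell n a b - 1} - T_I n a b)"

definition rho_T :: "nat \<Rightarrow> nat \<Rightarrow> nat \<Rightarrow> real" where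
  "rho_T n a b = dist_rho (T_verts n a b) (T_edges n a b)"

end

theory Submission
  imports Defs "Jordan_Normal_Form.Spectral_Radius" "HOL-Analysis.Function_Topology"
begin


lemma finite_eigs:
  fixes V :: "'a set" and d :: "'a \<Rightarrow> 'a \<Rightarrow> real"
  assumes "finite V"
  shows "finite {mu. \<exists>x. (\<exists>u\<in>V. x u \<noteq> 0) \<and> (\<forall>u\<in>V. (\<Sum>v\<in>V. d u v * x v) = mu * x u)}"
proof -
  define N where "N = card V"
  obtain f where f: "bij_betw f {0..<N} V" using ex_bij_betw_nat_finite[OF assms] N_def by blast
  define A where "A = mat N N (\<lambda>(i,j). d (f i) (f j))"
  have A: "A \<in> carrier_mat N N" unfolding A_def by simp
  have "{mu. \<exists>x. (\<exists>u\<in>V. x u \<noteq> 0) \<and> (\<forall>u\<in>V. (\<Sum>v\<in>V. d u v * x v) = mu * x u)} \<subseteq> spectrum A"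
  proof
    fix mu assume "mu \<in> {mu. \<exists>x. (\<exists>u\<in>V. x u \<noteq> 0) \<and> (\<forall>u\<in>V. (\<Sum>v\<in>V. d u v * x v) = mu * x u)}"
    then obtain x u where u: "u \<in> V" "x u \<noteq> 0" and ev: "\<forall>u\<in>V. (\<Sum>v\<in>V. d u v * x v) = mu * x u" by blast
    define w where "w = vec N (\<lambda>i. x (f i))"
    obtain i where i: "i < N" "f i = u" using f u(1) unfolding bij_betw_def by auto
    have wn: "w \<noteq> 0\<^sub>v N"
    proof
      assume "w = 0\<^sub>v N"
      then have "w $ i = 0" using i by simp
      then show False using i u unfolding w_def by simp
    qed
    have "A *\<^sub>v w = mu \<cdot>\<^sub>v w"
    proof (rule eq_vecI)
      fix k assume k: "k < dim_vec (mu \<cdot>\<^sub>v w)"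
      then have k': "k < N" unfolding w_def by simp
      have "(A *\<^sub>v w) $ k = (\<Sum>j = 0..<N. d (f k) (f j) * x (f j))"
        using k' unfolding A_def w_def by (simp add: scalar_prod_def)
      also have "\<dots> = (\<Sum>v\<in>V. d (f k) v * x v)"
        using sum.reindex_bij_betw[OF f, of "\<lambda>v. d (f k) v * x v"] by simp
      also have "\<dots> = mu * x (f k)" using ev f k' unfolding bij_betw_def by auto
      finally show "(A *\<^sub>v w) $ k = (mu \<cdot>\<^sub>v w) $ k" using k' unfolding w_def by simp
    qed (simp add: A_def w_def)
    then have "eigenvector A w mu" unfolding eigenvector_def using wn A unfolding w_def by auto
    then show "mu \<in> spectrum A" unfolding spectrum_def eigenvalue_def by auto
  qed
  then show ?thesis using card_finite_spectrum(1)[OF A] finite_subset by blast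
qed



lemma quad_zero:
  fixes B C :: real
  assumes "\<And>t. 2 * t * B + t^2 * C \<le> 0"
  shows "B = 0"
proof (rule ccontr)
  assume nz: "B \<noteq> 0"
  define t where "t = B / (\<bar>C\<bar> + 1)"
  have pos: "\<bar>C\<bar> + 1 > 0" by simp
  have h: "2 * t * B + t^2 * C \<le> 0" by (rule assms)
  have ts: "t * (\<bar>C\<bar> + 1) = B" unfolding t_def using pos by simp
  have "(2 * t * B + t^2 * C) * (\<bar>C\<bar> + 1)^2 = 2 * B * (t * (\<bar>C\<bar> + 1)) * (\<bar>C\<bar> + 1) + (t * (\<bar>C\<bar> + 1))^2 * C"
    by (simp add: power2_eq_square algebra_simps)
  also have "\<dots> = B^2 * (2 * (\<bar>C\<bar> + 1) + C)" unfolding ts by (simp add: power2_eq_square algebra_simps)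
  finally have "(2 * t * B + t^2 * C) * (\<bar>C\<bar> + 1)^2 = B^2 * (2 * (\<bar>C\<bar> + 1) + C)" .
  moreover have "B^2 * (2 * (\<bar>C\<bar> + 1) + C) > 0"
    using nz by (intro mult_pos_pos) (auto simp: abs_if)
  moreover have "(2 * t * B + t^2 * C) * (\<bar>C\<bar> + 1)^2 \<le> 0"
    using h pos by (simp add: mult_nonpos_nonneg)
  ultimately show False by linarith
qed

lemma rayleigh:
  fixes V :: "'a set" and d :: "'a \<Rightarrow> 'a \<Rightarrow> real" and y :: "'a \<Rightarrow> real"
  assumes fin: "finite V" and sym: "\<And>u v. u \<in> V \<Longrightarrow> v \<in> V \<Longrightarrow> d u v = d v u"
    and ypos: "(\<Sum>v\<in>V. (y v)^2) > 0"
  shows "\<exists>mu. (\<exists>x. (\<exists>u\<in>V. x u \<noteq> 0) \<and> (\<forall>u\<in>V. (\<Sum>v\<in>V. d u v * x v) = mu * x u))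
          \<and> (\<Sum>u\<in>V. \<Sum>v\<in>V. d u v * y u * y v) \<le> mu * (\<Sum>v\<in>V. (y v)^2)"
proof -
  define Q where "Q x = (\<Sum>u\<in>V. \<Sum>v\<in>V. d u v * x u * x v)" for x :: "'a \<Rightarrow> real"
  define Nm where "Nm x = (\<Sum>v\<in>V. (x v)^2)" for x :: "'a \<Rightarrow> real"
  define L where "L x z = (\<Sum>u\<in>V. \<Sum>v\<in>V. d u v * x u * z v)" for x z :: "'a \<Rightarrow> real"
  define S where "S = (\<lambda>i::'a. if i \<in> V then {-1..1::real} else {0})"
  define K where "K = PiE UNIV S \<inter> {x. Nm x = 1}"
  have "compactin (product_topology (\<lambda>_. euclidean) UNIV) (PiE UNIV S)"
    unfolding compactin_PiE by (auto simp: S_def)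
  then have c1: "compact (PiE UNIV S)"
    unfolding euclidean_product_topology by simp
  have contNm: "continuous_on A Nm" for A
    unfolding Nm_def
    by (intro continuous_intros continuous_on_product_coordinates continuous_on_subset[OF continuous_on_product_coordinates]) auto
  have contQ: "continuous_on A Q" for A
    unfolding Q_def
    by (intro continuous_intros continuous_on_subset[OF continuous_on_product_coordinates]) auto
  have "closed {x. Nm x = 1}"
    by (rule closed_Collect_eq) (auto intro: contNm)
  then have cK: "compact K" unfolding K_def using c1 by (simp add: compact_Int_closed)
  obtain u0 where u0: "u0 \<in> V" using ypos by (metis all_not_in_conv sum.empty less_irrefl)
  define e0 where "e0 = (\<lambda>w. if w = u0 then 1 else 0::real)"
  have "Nm e0 = (\<Sum>v\<in>V. if v = u0 then 1 else 0)" unfolding Nm_def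
    by (intro sum.cong) (auto simp: e0_def)
  then have "Nm e0 = 1" using fin u0 by simp
  then have "e0 \<in> K" unfolding K_def S_def using u0
    by (auto simp: PiE_iff e0_def)
  then have Kne: "K \<noteq> {}" by auto
  obtain x0 where x0K: "x0 \<in> K" and x0max: "\<And>z. z \<in> K \<Longrightarrow> Q z \<le> Q x0"
    using continuous_attains_sup[OF cK Kne contQ] by blast
  define lam where "lam = Q x0"
  have Nx0: "Nm x0 = 1" using x0K unfolding K_def by simp
  have homQ: "Q (\<lambda>v. c * z v) = c^2 * Q z" for c z
    unfolding Q_def by (simp add: sum_distrib_left power2_eq_square algebra_simps)
  have homN: "Nm (\<lambda>v. c * z v) = c^2 * Nm z" for c z
    unfolding Nm_def by (simp add: sum_distrib_left power2_eq_square algebra_simps)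
  have Qcong: "Q z = Q z'" if "\<And>v. v \<in> V \<Longrightarrow> z v = z' v" for z z'
    unfolding Q_def using that by simp
  have Ncong: "Nm z = Nm z'" if "\<And>v. v \<in> V \<Longrightarrow> z v = z' v" for z z'
    unfolding Nm_def using that by simp
  have bound: "Q z \<le> lam * Nm z" for z
  proof (cases "Nm z = 0")
    case True
    then have "\<forall>v\<in>V. (z v)^2 = 0" unfolding Nm_def using fin
      by (subst (asm) sum_nonneg_eq_0_iff) auto
    then have "Q z = 0" unfolding Q_def by simp
    then show ?thesis using True by simp
  next
    case False
    have Nnn: "Nm z \<ge> 0" unfolding Nm_def by (simp add: sum_nonneg)
    with False have Np: "Nm z > 0" by simp
    define c where "c = 1 / sqrt (Nm z)"
    have c2: "c^2 = 1 / Nm z" unfolding c_def using Np by (simp add: power_divide)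
    define w where "w = (\<lambda>v. if v \<in> V then c * z v else 0)"
    have "Nm w = c^2 * Nm z" using homN[of c z] Ncong[of w "\<lambda>v. c * z v"] unfolding w_def by simp
    then have Nw: "Nm w = 1" using c2 Np by simp
    have "w \<in> PiE UNIV S"
    proof -
      have "\<bar>w v\<bar> \<le> 1" if "v \<in> V" for v
      proof -
        have "(w v)^2 \<le> Nm w" unfolding Nm_def using fin that
          by (intro member_le_sum) auto
        then have "(w v)^2 \<le> 1^2" using Nw by simp
        then show ?thesis using abs_le_square_iff by (metis abs_one)
      qed
      then show ?thesis unfolding S_def w_def by (auto simp: PiE_iff abs_le_iff)
    qed
    then have "w \<in> K" using Nw unfolding K_def by simp
    then have "Q w \<le> lam" using x0max lam_def by simp
    moreover have "Q w = c^2 * Q z" using homQ[of c z] Qcong[of w "\<lambda>v. c * z v"] unfolding w_def by simp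
    ultimately have "Q z / Nm z \<le> lam" using c2 by simp
    then show ?thesis using Np by (simp add: divide_le_eq mult.commute)
  qed
  have expQ: "Q (\<lambda>v. x v + t * z v) = Q x + t * (L x z + L z x) + t^2 * Q z" for x z t
    unfolding Q_def L_def
    by (simp add: sum.distrib sum_distrib_left power2_eq_square algebra_simps)
  have expN: "Nm (\<lambda>v. x v + t * z v) = Nm x + 2 * t * (\<Sum>v\<in>V. x v * z v) + t^2 * Nm z" for x z t
    unfolding Nm_def
    by (simp add: sum.distrib sum_distrib_left power2_eq_square algebra_simps)
  have Lsym: "L z x = L x z" for x z
    unfolding L_def
    apply (subst sum.swap)
    apply (intro sum.cong refl)
    using sym by (simp add: algebra_simps)
  have eig: "(\<Sum>v\<in>V. d u v * x0 v) = lam * x0 u" if u: "u \<in> V" for u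
  proof -
    define z where "z = (\<lambda>w. if w = u then 1 else 0::real)"
    define B where "B = L x0 z - lam * (\<Sum>v\<in>V. x0 v * z v)"
    define C where "C = Q z - lam * Nm z"
    have "2 * t * B + t^2 * C \<le> 0" for t
    proof -
      have "Q (\<lambda>v. x0 v + t * z v) \<le> lam * Nm (\<lambda>v. x0 v + t * z v)" by (rule bound)
      then have h: "Q x0 + t * (L x0 z + L z x0) + t^2 * Q z \<le> lam * (Nm x0 + 2 * t * (\<Sum>v\<in>V. x0 v * z v) + t^2 * Nm z)"
        by (simp only: expQ expN)
      have l: "L z x0 = L x0 z" by (rule Lsym)
      have "2 * t * B + t^2 * C = (Q x0 + t * (L x0 z + L z x0) + t^2 * Q z) - lam * (Nm x0 + 2 * t * (\<Sum>v\<in>V. x0 v * z v) + t^2 * Nm z)"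
        unfolding B_def C_def l Nx0 lam_def by (simp add: algebra_simps)
      then show ?thesis using h by linarith
    qed
    then have "B = 0" by (rule quad_zero)
    moreover have "L x0 z = (\<Sum>v\<in>V. d u v * x0 v)"
      unfolding L_def z_def using fin u
      by (simp add: if_distrib sum.delta cong: if_cong) (intro sum.cong refl, simp add: sym)
    moreover have "(\<Sum>v\<in>V. x0 v * z v) = x0 u" unfolding z_def using fin u
      by (simp add: if_distrib cong: if_cong)
    ultimately show ?thesis unfolding B_def by simp
  qed
  have "\<exists>u\<in>V. x0 u \<noteq> 0"
  proof (rule ccontr)
    assume "\<not> ?thesis"
    then have "Nm x0 = 0" unfolding Nm_def by simp
    then show False using Nx0 by simp
  qed
  then show ?thesis using eig bound[of y] unfolding Q_def Nm_def by blast
qed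

lemma loose_path_rev:
  assumes "loose_path E vs es"
  shows "loose_path E (rev vs) (rev es)"
proof -
  let ?m = "length es"
  have L: "length vs = Suc ?m" and D: "distinct vs" "distinct es" and S: "set es \<subseteq> E"
    and I: "\<And>i. i < ?m \<Longrightarrow> vs ! i \<in> es ! i \<and> vs ! Suc i \<in> es ! i"
    and J: "\<And>i j. i < ?m \<Longrightarrow> j < ?m \<Longrightarrow> Suc i < j \<Longrightarrow> es ! i \<inter> es ! j = {}"
    using assms unfolding loose_path_def by auto
  have "rev vs ! i \<in> rev es ! i \<and> rev vs ! Suc i \<in> rev es ! i" if i: "i < ?m" for i
  proof -
    have a: "rev es ! i = es ! (?m - 1 - i)" using i by (simp add: rev_nth)
    have b: "rev vs ! i = vs ! Suc (?m - 1 - i)" using i L by (simp add: rev_nth Suc_diff_Suc)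
    have c: "rev vs ! Suc i = vs ! (?m - 1 - i)" using i L by (simp add: rev_nth)
    show ?thesis unfolding a b c using I[of "?m - 1 - i"] i by auto
  qed
  moreover have "rev es ! i \<inter> rev es ! j = {}" if "i < ?m" "j < ?m" "Suc i < j" for i j
  proof -
    have "es ! (?m - 1 - j) \<inter> es ! (?m - 1 - i) = {}" using J[of "?m - 1 - j" "?m - 1 - i"] that by auto
    then show ?thesis using that by (simp add: rev_nth Int_commute)
  qed
  ultimately show ?thesis using L D S unfolding loose_path_def by auto
qed

lemma path_rev_ex:
  assumes "loose_path E vs es" "length es = p" "hd vs = u" "last vs = v"
  shows "\<exists>vs es. loose_path E vs es \<and> length es = p \<and> hd vs = v \<and> last vs = u"
proof -
  have "vs \<noteq> []" using assms(1) unfolding loose_path_def by auto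
  then show ?thesis using loose_path_rev[OF assms(1)] assms by (intro exI[of _ "rev vs"] exI[of _ "rev es"]) (auto simp: hd_rev last_rev)
qed

lemma hdist_sym: "hdist E u v = hdist E v u"
proof -
  have "(\<exists>vs es. loose_path E vs es \<and> length es = p \<and> hd vs = u \<and> last vs = v) \<longleftrightarrow>
        (\<exists>vs es. loose_path E vs es \<and> length es = p \<and> hd vs = v \<and> last vs = u)" for p
    using path_rev_ex by metis
  then show ?thesis unfolding hdist_def by simp
qed

lemma hdist_ge:
  assumes ex: "\<exists>vs es. loose_path E vs es \<and> hd vs = u \<and> last vs = v"
    and lb: "\<And>vs es. loose_path E vs es \<Longrightarrow> hd vs = u \<Longrightarrow> last vs = v \<Longrightarrow> k \<le> length es"
  shows "k \<le> hdist E u v"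
proof -
  obtain vs es where "loose_path E vs es" "hd vs = u" "last vs = v" using ex by blast
  then have "\<exists>p. \<exists>vs es. loose_path E vs es \<and> length es = p \<and> hd vs = u \<and> last vs = v" by blast
  from LeastI_ex[OF this] obtain vs' es' where
    "loose_path E vs' es'" "length es' = hdist E u v" "hd vs' = u" "last vs' = v"
    unfolding hdist_def by blast
  then show ?thesis using lb by fastforce
qed

fun idx :: "tvert \<Rightarrow> nat" where
  "idx (Vv k) = k" | "idx (Wv k) = k"

lemma path_idx_bound:
  assumes lp: "loose_path E vs es"
    and edges: "\<And>e a b. e \<in> E \<Longrightarrow> a \<in> e \<Longrightarrow> b \<in> e \<Longrightarrow> \<bar>int (idx a) - int (idx b)\<bar> \<le> 1"
  shows "\<bar>int (idx (last vs)) - int (idx (hd vs))\<bar> \<le> int (length es)"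
proof -
  have L: "length vs = Suc (length es)" and S: "set es \<subseteq> E"
    and I: "\<And>i. i < length es \<Longrightarrow> vs ! i \<in> es ! i \<and> vs ! Suc i \<in> es ! i"
    using lp unfolding loose_path_def by auto
  have step: "\<bar>int (idx (vs ! Suc i)) - int (idx (vs ! i))\<bar> \<le> 1" if "i < length es" for i
  proof -
    have "es ! i \<in> E" using S that by auto
    then show ?thesis using edges I[OF that] by blast
  qed
  have "m \<le> length es \<Longrightarrow> \<bar>int (idx (vs ! m)) - int (idx (vs ! 0))\<bar> \<le> int m" for m
  proof (induction m)
    case 0 then show ?case by simp
  next
    case (Suc m)
    then have "\<bar>int (idx (vs ! m)) - int (idx (vs ! 0))\<bar> \<le> int m" by simp
    moreover have "\<bar>int (idx (vs ! Suc m)) - int (idx (vs ! m))\<bar> \<le> 1" using step Suc.prems by simp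
    ultimately show ?case by linarith
  qed
  from this[of "length es"] have h: "\<bar>int (idx (vs ! length es)) - int (idx (vs ! 0))\<bar> \<le> int (length es)" by simp
  have ne: "vs \<noteq> []" using L by auto
  have "hd vs = vs ! 0" using ne by (simp add: hd_conv_nth)
  moreover have "last vs = vs ! length es" using ne L by (simp add: last_conv_nth)
  ultimately show ?thesis using h by simp
qed
definition eT :: "nat \<Rightarrow> nat \<Rightarrow> nat \<Rightarrow> nat \<Rightarrow> tvert set" where
  "eT n a b k = (if k \<in> T_I n a b then {Vv k, Wv k, Vv (Suc k)} else {Vv k, Vv (Suc k)})"

lemma eT_in: "1 \<le> k \<Longrightarrow> k < T_ell n a b \<Longrightarrow> eT n a b k \<in> T_edges n a b"
  unfolding eT_def T_edges_def by auto

lemma T_edges_idx: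
  "e \<in> T_edges n a b \<Longrightarrow> x \<in> e \<Longrightarrow> y \<in> e \<Longrightarrow> \<bar>int (idx x) - int (idx y)\<bar> \<le> 1"
  unfolding T_edges_def by auto

lemma spine_path:
  assumes "1 \<le> i" "i \<le> j" "j \<le> T_ell n a b"
  shows "loose_path (T_edges n a b) (map Vv [i..<Suc j]) (map (eT n a b) [i..<j])"
proof -
  have inj: "inj_on (eT n a b) {i..<j}"
  proof (rule inj_onI)
    fix k m assume "eT n a b k = eT n a b m"
    then have "Vv k \<in> eT n a b m" "Vv m \<in> eT n a b k" unfolding eT_def by (auto split: if_splits)
    then show "k = m" unfolding eT_def by (auto split: if_splits)
  qed
  have "distinct (map (eT n a b) [i..<j])" using inj by (simp add: distinct_map)
  moreover have "distinct (map Vv [i..<Suc j])" by (simp add: distinct_map inj_on_def)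
  moreover have "set (map (eT n a b) [i..<j]) \<subseteq> T_edges n a b"
    using assms by (auto intro!: eT_in)
  moreover have "\<forall>p < j - i. map Vv [i..<Suc j] ! p \<in> map (eT n a b) [i..<j] ! p \<and>
                  map Vv [i..<Suc j] ! Suc p \<in> map (eT n a b) [i..<j] ! p"
    by (auto simp: eT_def nth_append)
  moreover have "\<forall>p < j - i. \<forall>q < j - i. Suc p < q \<longrightarrow>
       map (eT n a b) [i..<j] ! p \<inter> map (eT n a b) [i..<j] ! q = {}"
    by (auto simp: eT_def)
  ultimately show ?thesis using assms unfolding loose_path_def by simp
qed

lemma spine_dist:
  assumes "i \<in> {1..T_ell n a b}" "j \<in> {1..T_ell n a b}"
  shows "(if i \<le> j then j - i else i - j) \<le> hdist (T_edges n a b) (Vv i) (Vv j)"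
proof -
  have ex: "\<exists>vs es. loose_path (T_edges n a b) vs es \<and> hd vs = Vv i \<and> last vs = Vv j"
  proof (cases "i \<le> j")
    case True
    show ?thesis using spine_path[of i j n a b] True assms
      by (intro exI[of _ "map Vv [i..<Suc j]"] exI[of _ "map (eT n a b) [i..<j]"]) (auto simp del: upt_Suc simp: hd_map last_map)
  next
    case False
    then have "\<exists>vs es. loose_path (T_edges n a b) vs es \<and> length es = i - j \<and> hd vs = Vv j \<and> last vs = Vv i"
      using spine_path[of j i n a b] assms
      by (intro exI[of _ "map Vv [j..<Suc i]"] exI[of _ "map (eT n a b) [j..<i]"]) (auto simp del: upt_Suc simp: hd_map last_map)
    then show ?thesis using path_rev_ex by metis
  qed
  show ?thesis
  proof (rule hdist_ge[OF ex])
    fix vs es assume "loose_path (T_edges n a b) vs es" "hd vs = Vv i" "last vs = Vv j"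
    then have "\<bar>int j - int i\<bar> \<le> int (length es)"
      using path_idx_bound[of "T_edges n a b" vs es] T_edges_idx by fastforce
    then show "(if i \<le> j then j - i else i - j) \<le> length es" by auto
  qed
qed
lemma H_sum: "2 * (\<Sum>i\<in>{1..n}. Suc n - i) = n * Suc n"
proof (induction n)
  case 0 then show ?case by simp
next
  case (Suc n)
  have "(\<Sum>i\<in>{1..Suc n}. Suc (Suc n) - i) = (\<Sum>i\<in>{1..n}. Suc (Suc n) - i) + 1"
    by (simp add: sum.cl_ivl_Suc)
  also have "(\<Sum>i\<in>{1..n}. Suc (Suc n) - i) = (\<Sum>i\<in>{1..n}. (Suc n - i) + 1)"
    by (intro sum.cong) auto
  also have "\<dots> = (\<Sum>i\<in>{1..n}. Suc n - i) + n" by (simp only: sum.distrib) simp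
  finally show ?case using Suc.IH by (simp add: algebra_simps)
qed

definition ddist :: "nat \<Rightarrow> nat \<Rightarrow> nat" where
  "ddist i j = (if i \<le> j then j - i else i - j)"

lemma G_sum: "3 * (\<Sum>i\<in>{1..n}. \<Sum>j\<in>{1..n}. ddist i j) + n = n ^ 3"
proof (induction n)
  case 0 then show ?case by simp
next
  case (Suc n)
  define G where "G = (\<Sum>i\<in>{1..n}. \<Sum>j\<in>{1..n}. ddist i j)"
  define H where "H = (\<Sum>i\<in>{1..n}. Suc n - i)"
  have a: "(\<Sum>j\<in>{1..Suc n}. ddist i j) = (\<Sum>j\<in>{1..n}. ddist i j) + (Suc n - i)" if "i \<in> {1..n}" for i
    using that by (simp add: sum.cl_ivl_Suc ddist_def)
  have b: "(\<Sum>j\<in>{1..Suc n}. ddist (Suc n) j) = H"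
    unfolding H_def by (simp add: sum.cl_ivl_Suc ddist_def)
  have "(\<Sum>i\<in>{1..Suc n}. \<Sum>j\<in>{1..Suc n}. ddist i j)
        = (\<Sum>i\<in>{1..n}. \<Sum>j\<in>{1..Suc n}. ddist i j) + H"
    using b by (simp add: sum.cl_ivl_Suc)
  also have "(\<Sum>i\<in>{1..n}. \<Sum>j\<in>{1..Suc n}. ddist i j) = (\<Sum>i\<in>{1..n}. (\<Sum>j\<in>{1..n}. ddist i j) + (Suc n - i))"
    by (rule sum.cong[OF refl a])
  also have "\<dots> = G + H" unfolding G_def H_def by (simp only: sum.distrib)
  finally have e: "(\<Sum>i\<in>{1..Suc n}. \<Sum>j\<in>{1..Suc n}. ddist i j) = G + 2 * H" by simp
  have "2 * H = n * Suc n" unfolding H_def by (rule H_sum)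
  moreover have "3 * G + n = n ^ 3" unfolding G_def by (rule Suc.IH)
  ultimately show ?case unfolding e by (simp add: algebra_simps power3_eq_cube)
qed

lemma lin_sum: "(\<Sum>i = 1..m. (R::real) - 2 * real i) = real m * R - real m * (real m + 1)"
  by (induction m) (auto simp: algebra_simps)

lemma sum_bound:
  fixes R :: real
  assumes "R > 1"
  shows "R / (R - 1) * (\<Sum>i = 1..m. R - 2 * real i) \<le> R * (R - 1) / 4"
proof -
  have "real m * R - real m * (real m + 1) \<le> (R - 1)^2 / 4"
  proof -
    have "0 \<le> (R - 2 * real m - 1)^2" by simp
    then show ?thesis by (simp add: power2_eq_square algebra_simps)
  qed
  then have "R / (R - 1) * (\<Sum>i = 1..m. R - 2 * real i) \<le> R / (R - 1) * ((R - 1)^2 / 4)"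
    unfolding lin_sum using assms by (intro mult_left_mono) auto
  also have "\<dots> = R * (R - 1) / 4" using assms by (simp add: power2_eq_square field_simps)
  finally show ?thesis .
qed

lemma final_ineq:
  fixes L R s :: real
  assumes "L \<ge> R + s + 1" "R > 0" "s \<ge> 0"
  shows "(L^2 - 1) / 3 > s * (R - 1) + R * (R - 1) / 4"
proof -
  have "L^2 \<ge> (R + s + 1)^2" using assms by (intro power_mono) auto
  moreover have "4 * ((R + s + 1)^2 - 1) - (12 * s * (R - 1) + 3 * R * (R - 1)) = (R - 2 * s)^2 + 11 * R + 20 * s"
    by (simp add: power2_eq_square algebra_simps)
  moreover have "(R - 2 * s)^2 \<ge> 0" by simp
  ultimately have "4 * ((R + s + 1)^2 - 1) > 12 * s * (R - 1) + 3 * R * (R - 1)" using assms by linarith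
  moreover have "4 * (L^2 - 1) \<ge> 4 * ((R + s + 1)^2 - 1)" using \<open>L^2 \<ge> (R + s + 1)^2\<close> by simp
  ultimately have "4 * (L^2 - 1) > 12 * s * (R - 1) + 3 * R * (R - 1)" by linarith
  then show ?thesis by (simp add: field_simps)
qed
theorem lemma3p4:
  fixes n a b :: nat
  assumes "b \<ge> a + 2"
    and "2 * (a + b) < n - 1"
    and "real b < real (n - a - b) / 2"
  shows "rho_T n a b >
     (2 * real a + 1) * (real (n - a - b - b - a) - 1)
     + real (n - a - b - b - a) / (real (n - a - b - b - a) - 1)
       * (\<Sum>i = 1..(n - a - b - b - a - 1) div 2. real (n - a - b - b - a) - 2 * real i)"
proof -
  define l where "l = T_ell n a b"
  define V where "V = T_verts n a b"
  define E where "E = T_edges n a b"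
  define d where "d = (\<lambda>u v. real (hdist E u v))"
  define Sp where "Sp = Vv ` {1..l}"
  define y where "y = (\<lambda>w. if w \<in> Sp then 1 else 0::real)"
  have finV: "finite V" unfolding V_def T_verts_def T_I_def by simp
  have SpV: "Sp \<subseteq> V" unfolding Sp_def V_def T_verts_def l_def by auto
  have finSp: "finite Sp" unfolding Sp_def by simp
  have cardSp: "card Sp = l" unfolding Sp_def by (simp add: card_image inj_on_def)
  have l_ge: "l \<ge> 1" unfolding l_def T_ell_def using assms by simp
  have Ny: "(\<Sum>v\<in>V. (y v)^2) = real l"
  proof -
    have "(\<Sum>v\<in>V. (y v)^2) = (\<Sum>v\<in>V. if v \<in> Sp then 1 else 0)"
      unfolding y_def by (intro sum.cong) auto
    also have "\<dots> = real (card (V \<inter> Sp))" using finV by (simp add: sum.inter_restrict[symmetric])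
    also have "V \<inter> Sp = Sp" using SpV by auto
    finally show ?thesis using cardSp by simp
  qed
  have sym: "\<And>u v. u \<in> V \<Longrightarrow> v \<in> V \<Longrightarrow> d u v = d v u" unfolding d_def using hdist_sym by metis
  have "(\<Sum>v\<in>V. (y v)^2) > 0" using Ny l_ge by simp
  from rayleigh[of V d y, OF finV sym this] obtain mu where
    ev: "\<exists>x. (\<exists>u\<in>V. x u \<noteq> 0) \<and> (\<forall>u\<in>V. (\<Sum>v\<in>V. d u v * x v) = mu * x u)"
    and rq: "(\<Sum>u\<in>V. \<Sum>v\<in>V. d u v * y u * y v) \<le> mu * (\<Sum>v\<in>V. (y v)^2)" by blast
  have Qy: "(\<Sum>u\<in>V. \<Sum>v\<in>V. d u v * y u * y v) = (\<Sum>u\<in>Sp. \<Sum>v\<in>Sp. d u v)"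
  proof -
    have "(\<Sum>u\<in>V. \<Sum>v\<in>V. d u v * y u * y v) = (\<Sum>u\<in>Sp. \<Sum>v\<in>V. d u v * y u * y v)"
      using finV SpV by (intro sum.mono_neutral_right) (auto simp: y_def)
    also have "\<dots> = (\<Sum>u\<in>Sp. \<Sum>v\<in>Sp. d u v * y u * y v)"
      using finV SpV by (intro sum.cong refl sum.mono_neutral_right) (auto simp: y_def)
    also have "\<dots> = (\<Sum>u\<in>Sp. \<Sum>v\<in>Sp. d u v)"
      by (intro sum.cong refl) (auto simp: y_def)
    finally show ?thesis .
  qed
  have "(\<Sum>u\<in>Sp. \<Sum>v\<in>Sp. d u v) = (\<Sum>i\<in>{1..l}. \<Sum>j\<in>{1..l}. d (Vv i) (Vv j))"
    unfolding Sp_def by (simp add: sum.reindex inj_on_def)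
  also have "\<dots> \<ge> (\<Sum>i\<in>{1..l}. \<Sum>j\<in>{1..l}. real (ddist i j))"
  proof (intro sum_mono)
    fix i j assume "i \<in> {1..l}" "j \<in> {1..l}"
    then have "ddist i j \<le> hdist E (Vv i) (Vv j)"
      using spine_dist[of i n a b j] unfolding ddist_def E_def l_def by simp
    then show "real (ddist i j) \<le> d (Vv i) (Vv j)" unfolding d_def by simp
  qed
  finally have G: "(\<Sum>i\<in>{1..l}. \<Sum>j\<in>{1..l}. real (ddist i j)) \<le> mu * real l"
    using rq Qy Ny by simp
  have G3: "3 * (\<Sum>i\<in>{1..l}. \<Sum>j\<in>{1..l}. real (ddist i j)) + real l = real l ^ 3"
  proof -
    have "real (3 * (\<Sum>i\<in>{1..l}. \<Sum>j\<in>{1..l}. ddist i j) + l) = real (l ^ 3)"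
      using G_sum[of l] by simp
    then show ?thesis by simp
  qed
  have mu_lb: "mu \<ge> (real l ^ 2 - 1) / 3"
  proof -
    have "real l ^ 3 - real l \<le> 3 * mu * real l" using G G3 by linarith
    then have "real l * (real l ^ 2 - 1) \<le> real l * (3 * mu)"
      by (simp add: power2_eq_square power3_eq_cube algebra_simps)
    then have "real l ^ 2 - 1 \<le> 3 * mu" using l_ge by (simp add: mult_le_cancel_left)
    then show ?thesis by simp
  qed
  have fin: "finite {mu. dist_eigenvalue V E mu}"
    unfolding dist_eigenvalue_def using finite_eigs[OF finV, of "\<lambda>u v. real (hdist E u v)"] by simp
  have "dist_eigenvalue V E mu" unfolding dist_eigenvalue_def using ev unfolding d_def by simp
  then have rho_ge: "rho_T n a b \<ge> mu"
    unfolding rho_T_def dist_rho_def V_def[symmetric] E_def[symmetric] using fin by (simp add: Max_ge)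
  define r where "r = n - a - b - b - a"
  have n_ge: "n \<ge> 2 * a + 2 * b + 2" using assms by simp
  have rl: "real r = real l - real a - real b" and lreal: "real l = real n - real a - real b"
    unfolding r_def l_def T_ell_def using n_ge by auto
  have r_ge: "real r \<ge> 2" using rl lreal n_ge by simp
  have sb: "real r / (real r - 1) * (\<Sum>i = 1..(r - 1) div 2. real r - 2 * real i) \<le> real r * (real r - 1) / 4"
    using sum_bound[of "real r" "(r - 1) div 2"] r_ge by simp
  have fi: "(real l ^ 2 - 1) / 3 > (2 * real a + 1) * (real r - 1) + real r * (real r - 1) / 4"
    using final_ineq[of "real r" "2 * real a + 1" "real l"] rl assms(1) r_ge by simp
  show ?thesis unfolding r_def[symmetric] using sb fi mu_lb rho_ge by linarith
qed

end
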